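(* Let $\rho$ be a generalised Group 2 two-qubit $X$-state with maximally-mixed subsystems, of type $t\in\{1,2\}$, with real parameters $\beta_0,\beta_1,\beta_2,\beta_3,\beta_4$. Define the points of $\mathbb{R}^2$ $$C:=(\beta_4,\beta_3),\quad D:=(\beta_1,\beta_2),\quad E:=(\beta_1,-\beta_2),\quad F:=(\beta_4,-\beta_3),$$ and put $r:=1-|\beta_0|$ and $R:=1+|\beta_0|$. For $P\in\mathbb{R}^2$ and $s\ge 0$, let $(P,s)$ denote the closed disc with center $P$ and radius $s$; for $\epsilon\in\{\pm1\}$ and $A\subseteq\mathbb{R}^2$, let $\epsilon A=\{\epsilon a: a\in A\}$. (i) For given $\beta_0,\beta_3,\beta_4$, let $\mathcal{V}:=(C,r)\cap(-C,R)$, $\mathcal{S}:=(C,r)\cap(-C,r)$ and $\mathcal{E}:=\mathcal{V}\setminus\mathcal{S}$. These are the regions of validity, separability and entanglement, in the following sense. $\rho$ is valid if and only if $E\in(-1)^t\operatorname{sgn}(\beta_0)\mathcal{V}$. $\rho$ is separable if $E\in\mathcal{S}$. $\rho$ is entangled if $E\in(-1)^t\operatorname{sgn}(\beta_0)\mathcal{E}$. Moreover, $\mathcal{V}\neq\emptyset$ if and only if $\beta_3^2+\beta_4^2\le 1$, and $\mathcal{S}\neq\emptyset$ if and only if $\beta_3^2+\beta_4^2\le(1-|\beta_0|)^2$. (ii) Equivalently, for given $\beta_0,\beta_1,\beta_2$, let $\mathcal{V}':=(D,r)\cap(-D,R)$, $\mathcal{S}':=(D,r)\cap(-D,r)$ and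 $\mathcal{E}':=\mathcal{V}'\setminus\mathcal{S}'$. Then $\rho$ is valid if and only if $F\in(-1)^t\operatorname{sgn}(\beta_0)\mathcal{V}'$. $\rho$ is separable if $F\in\mathcal{S}'$. $\rho$ is entangled if $F\in(-1)^t\operatorname{sgn}(\beta_0)\mathcal{E}'$. Moreover, $\mathcal{V}'\neq\emptyset$ if and only if $\beta_1^2+\beta_2^2\le1$, and $\mathcal{S}'\neq\emptyset$ if and only if $\beta_1^2+\beta_2^2\le(1-|\beta_0|)^2$.
   Context: A two-qubit Hermitian trace-one $4\times4$ matrix $\rho$ is valid if it is positive semidefinite. It is separable if it is valid and its partial transpose $\rho^\Gamma$ is positive semidefinite. It is entangled if it is valid and $\rho^\Gamma$ is not positive semidefinite. Let $L^{+}:=\sqrt{(\beta_1+\beta_4)^2+(\beta_2-\beta_3)^2}$ and $L^{-}:=\sqrt{(\beta_1-\beta_4)^2+(\beta_2+\beta_3)^2}$. A generalised Group 2 $X$-state with maximally-mixed subsystems and parameters $\beta_0,\dots,\beta_4$ is of Type I ($t=1$) if: - the eigenvalues of $\rho$ are $\tfrac14(1+\beta_0\pm L^{-})$ and $\tfrac14(1-\beta_0\pm L^{+})$; - the eigenvalues of $\rho^\Gamma$ are $\tfrac14(1+\beta_0\pm L^{+})$ and $\tfrac14(1-\beta_0\pm L^{-})$. It is of Type II ($t=2$) if these two spectra are interchanged. Such states are $\rho=\tfrac14(I\otimes I+\sum c_q q)$ with $q$ ranging over the nontrivial Pauli operators commuting with some $A\otimes B$, $A,B\in\{X,Y,Z\}$,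 and the local coefficients set to zero. Example (Type I): $\rho=\tfrac14(I\otimes I+\beta_0 ZZ+\beta_1 XX+\beta_2 XY+\beta_3 YX+\beta_4 YY)$. Here $\beta_0$ is the coefficient of the correlation operator sharing no tensor factor with the others, and $\begin{pmatrix}\beta_1&\beta_2\\ \beta_3&\beta_4\end{pmatrix}$ is the remaining $2\times2$ block of the correlation matrix. $\operatorname{sgn}(\beta_0)\in\{\pm1\}$ denotes the sign of $\beta_0$. *)

theory Defs
  imports "Jordan_Normal_Form.Matrix" "Jordan_Normal_Form.Char_Poly"
begin

section \<open>Two-qubit matrices (indices 0..3, i = 2*a + b for qubits a,b)\<close>

text \<open>Pauli matrices: 0 = I, 1 = X, 2 = Y, 3 = Z.\<close>
definition pauli :: "nat \<Rightarrow> complex mat" where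
  "pauli k = mat 2 2 (\<lambda>(i,j).
     if k = 0 then (if i = j then 1 else 0)
     else if k = 1 then (if i \<noteq> j then 1 else 0)
     else if k = 2 then (if i = 0 \<and> j = 1 then - \<i> else if i = 1 \<and> j = 0 then \<i> else 0)
     else (if i = j then (if i = 0 then 1 else -1) else 0))"

definition kron2 :: "complex mat \<Rightarrow> complex mat \<Rightarrow> complex mat" where
  "kron2 A B = mat 4 4 (\<lambda>(i,j). A $$ (i div 2, j div 2) * B $$ (i mod 2, j mod 2))"

text \<open>Partial transpose (on the second qubit).\<close>
definition ptrans :: "complex mat \<Rightarrow> complex mat" where
  "ptrans \<rho> = mat 4 4 (\<lambda>(i,j). \<rho> $$ (2 * (i div 2) + j mod 2, 2 * (j div 2) + i mod 2))"

definition hermitian4 :: "complex mat \<Rightarrow> bool" where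
  "hermitian4 M \<longleftrightarrow> M \<in> carrier_mat 4 4 \<and> (\<forall>i<4. \<forall>j<4. M $$ (i,j) = cnj (M $$ (j,i)))"

definition trace4 :: "complex mat \<Rightarrow> complex" where
  "trace4 M = (\<Sum>i<4. M $$ (i,i))"

definition psd4 :: "complex mat \<Rightarrow> bool" where
  "psd4 M \<longleftrightarrow> hermitian4 M \<and>
     (\<forall>v :: nat \<Rightarrow> complex. let q = (\<Sum>i<4. \<Sum>j<4. cnj (v i) * M $$ (i,j) * v j)
                              in q \<in> \<real> \<and> 0 \<le> Re q)"

definition valid :: "complex mat \<Rightarrow> bool" where
  "valid \<rho> \<longleftrightarrow> psd4 \<rho>"

definition separable :: "complex mat \<Rightarrow> bool" where
  "separable \<rho> \<longleftrightarrow> valid \<rho> \<and> psd4 (ptrans \<rho>)"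

definition entangled :: "complex mat \<Rightarrow> bool" where
  "entangled \<rho> \<longleftrightarrow> valid \<rho> \<and> \<not> psd4 (ptrans \<rho>)"

text \<open>rho = 1/4 (I I + b0 A B + b1 P1 Q1 + b2 P1 Q2 + b3 P2 Q1 + b4 P2 Q2), where
  {A,P1,P2} = {X,Y,Z} = {B,Q1,Q2}: the Paulis commuting with A B, with no local terms.
  (b1 b2; b3 b4) is the remaining 2x2 block of the correlation matrix (rows = first qubit),
  in any ordering of the remaining Paulis.\<close>
definition group2_form :: "complex mat \<Rightarrow> real \<Rightarrow> real \<Rightarrow> real \<Rightarrow> real \<Rightarrow> real \<Rightarrow> bool" where
  "group2_form \<rho> b0 b1 b2 b3 b4 \<longleftrightarrow>
    (\<exists>A P1 P2 B Q1 Q2. {A, P1, P2} = {1,2,3::nat} \<and> {B, Q1, Q2} = {1,2,3::nat} \<and>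
       \<rho> = (1/4 :: complex) \<cdot>\<^sub>m
         (kron2 (pauli 0) (pauli 0)
          + complex_of_real b0 \<cdot>\<^sub>m kron2 (pauli A) (pauli B)
          + complex_of_real b1 \<cdot>\<^sub>m kron2 (pauli P1) (pauli Q1)
          + complex_of_real b2 \<cdot>\<^sub>m kron2 (pauli P1) (pauli Q2)
          + complex_of_real b3 \<cdot>\<^sub>m kron2 (pauli P2) (pauli Q1)
          + complex_of_real b4 \<cdot>\<^sub>m kron2 (pauli P2) (pauli Q2)))"

definition Lplus :: "real \<Rightarrow> real \<Rightarrow> real \<Rightarrow> real \<Rightarrow> real" where
  "Lplus b1 b2 b3 b4 = sqrt ((b1 + b4)\<^sup>2 + (b2 - b3)\<^sup>2)"

definition Lminus :: "real \<Rightarrow> real \<Rightarrow> real \<Rightarrow> real \<Rightarrow> real" where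
  "Lminus b1 b2 b3 b4 = sqrt ((b1 - b4)\<^sup>2 + (b2 + b3)\<^sup>2)"

definition has_spectrum4 :: "complex mat \<Rightarrow> real \<Rightarrow> real \<Rightarrow> real \<Rightarrow> real \<Rightarrow> bool" where
  "has_spectrum4 M a b c d \<longleftrightarrow>
     char_poly M = [:- complex_of_real a, 1:] * [:- complex_of_real b, 1:]
                 * [:- complex_of_real c, 1:] * [:- complex_of_real d, 1:]"


definition group2_type :: "nat \<Rightarrow> complex mat \<Rightarrow> real \<Rightarrow> real \<Rightarrow> real \<Rightarrow> real \<Rightarrow> real \<Rightarrow> bool" where
  "group2_type t \<rho> b0 b1 b2 b3 b4 \<longleftrightarrow>
    (let Lp = Lplus b1 b2 b3 b4; Lm = Lminus b1 b2 b3 b4;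
         S1 = has_spectrum4 \<rho>;  S2 = has_spectrum4 (ptrans \<rho>) in
     (t = 1 \<and> S1 ((1+b0+Lm)/4) ((1+b0-Lm)/4) ((1-b0+Lp)/4) ((1-b0-Lp)/4)
            \<and> S2 ((1+b0+Lp)/4) ((1+b0-Lp)/4) ((1-b0+Lm)/4) ((1-b0-Lm)/4))
   \<or> (t = 2 \<and> S1 ((1+b0+Lp)/4) ((1+b0-Lp)/4) ((1-b0+Lm)/4) ((1-b0-Lm)/4)
            \<and> S2 ((1+b0+Lm)/4) ((1+b0-Lm)/4) ((1-b0+Lp)/4) ((1-b0-Lp)/4)))"

definition gen_group2_state :: "nat \<Rightarrow> complex mat \<Rightarrow> real \<Rightarrow> real \<Rightarrow> real \<Rightarrow> real \<Rightarrow> real \<Rightarrow> bool" where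
  "gen_group2_state t \<rho> b0 b1 b2 b3 b4 \<longleftrightarrow>
     hermitian4 \<rho> \<and> trace4 \<rho> = 1 \<and> group2_form \<rho> b0 b1 b2 b3 b4 \<and> group2_type t \<rho> b0 b1 b2 b3 b4"

definition disc :: "real \<times> real \<Rightarrow> real \<Rightarrow> (real \<times> real) set" where
  "disc P s = {Q. sqrt ((fst Q - fst P)\<^sup>2 + (snd Q - snd P)\<^sup>2) \<le> s}"

definition negp :: "real \<times> real \<Rightarrow> real \<times> real" where
  "negp P = (- fst P, - snd P)"

definition scale_set :: "real \<Rightarrow> (real \<times> real) set \<Rightarrow> (real \<times> real) set" where
  "scale_set e A = (\<lambda>a. (e * fst a, e * snd a)) ` A"

text \<open>sgn(b0) in {+1,-1}; for b0 = 0 we take +1 (the result is symmetric then).\<close>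
definition sgn0 :: "real \<Rightarrow> real" where
  "sgn0 x = (if x < 0 then -1 else 1)"

end

theory Submission imports Defs "HOL-Analysis.Topology_Euclidean_Space" begin

definition qf :: "complex mat \<Rightarrow> (nat \<Rightarrow> complex) \<Rightarrow> complex" where
  "qf M v = (\<Sum>i<4. \<Sum>j<4. cnj (v i) * M $$ (i,j) * v j)"

definition eigp :: "complex mat \<Rightarrow> complex \<Rightarrow> (nat \<Rightarrow> complex) \<Rightarrow> bool" where
  "eigp M k u \<longleftrightarrow> (\<forall>i<4. (\<Sum>j<4. M $$ (i,j) * u j) = k * u i) \<and> (\<exists>i<4. u i \<noteq> 0)"

lemma root_iff_eig:
  assumes M: "M \<in> carrier_mat 4 4"
  shows "poly (char_poly M) k = 0 \<longleftrightarrow> (\<exists>u. eigp M k u)"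
proof -
  have "poly (char_poly M) k = 0 \<longleftrightarrow> eigenvalue M k"
    using eigenvalue_root_char_poly[OF M] by simp
  also have "\<dots> \<longleftrightarrow> (\<exists>u. eigp M k u)"
  proof
    assume "eigenvalue M k"
    then obtain v where v: "v \<in> carrier_vec 4" "v \<noteq> 0\<^sub>v 4" "M *\<^sub>v v = k \<cdot>\<^sub>v v"
      using M unfolding eigenvalue_def eigenvector_def by auto
    have "eigp M k (\<lambda>i. v $ i)"
      unfolding eigp_def
    proof (intro conjI allI impI)
      fix i assume i: "i < (4::nat)"
      have "(M *\<^sub>v v) $ i = k * v $ i" using v(3) v(1) i by simp
      moreover have "(M *\<^sub>v v) $ i = (\<Sum>j<4. M $$ (i,j) * v $ j)"
        using M v(1) i by (simp add: scalar_prod_def atLeast0LessThan)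
      ultimately show "(\<Sum>j<4. M $$ (i,j) * v $ j) = k * v $ i" by simp
    next
      show "\<exists>i<4. v $ i \<noteq> 0"
      proof (rule ccontr)
        assume "\<not> ?thesis"
        hence "v = 0\<^sub>v 4" using v(1) by (intro eq_vecI) auto
        thus False using v(2) by simp
      qed
    qed
    thus "\<exists>u. eigp M k u" by blast
  next
    assume "\<exists>u. eigp M k u"
    then obtain u where u: "eigp M k u" by blast
    let ?v = "Matrix.vec 4 u"
    have "eigenvector M ?v k"
      unfolding eigenvector_def
    proof (intro conjI)
      show "?v \<in> carrier_vec (dim_row M)" using M by simp
      show "?v \<noteq> 0\<^sub>v (dim_row M)"
      proof
        assume h: "?v = 0\<^sub>v (dim_row M)"
        obtain i where i: "i < 4" "u i \<noteq> 0" using u unfolding eigp_def by blast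
        have "vec_index ?v i = u i" using i by simp
        moreover have "vec_index (0\<^sub>v (dim_row M) :: complex Matrix.vec) i = 0" using i M by simp
        ultimately show False using h i by simp
      qed
      show "M *\<^sub>v ?v = k \<cdot>\<^sub>v ?v"
      proof (rule eq_vecI)
        fix i assume "i < dim_vec (k \<cdot>\<^sub>v ?v)"
        hence i: "i < 4" by simp
        have "(M *\<^sub>v ?v) $ i = (\<Sum>j<4. M $$ (i,j) * u j)"
          using M i by (simp add: scalar_prod_def atLeast0LessThan)
        also have "\<dots> = k * u i" using u i unfolding eigp_def by auto
        finally show "(M *\<^sub>v ?v) $ i = (k \<cdot>\<^sub>v ?v) $ i" using i by simp
      qed (use M in simp)
    qed
    thus "eigenvalue M k" unfolding eigenvalue_def by blast
  qed
  finally show ?thesis .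
qed

lemma sum4: "(\<Sum>i<4::nat. f i) = f 0 + f 1 + f 2 + f 3"
  by (simp add: eval_nat_numeral add.assoc)

definition nsq :: "(nat \<Rightarrow> complex) \<Rightarrow> real" where
  "nsq w = (\<Sum>i<4. (cmod (w i))\<^sup>2)"

lemma cnj_sum: "(\<Sum>i<4. cnj (w i) * w i) = complex_of_real (nsq w)"
  unfolding nsq_def of_real_sum
  by (intro sum.cong refl) (metis complex_norm_square mult.commute)

lemma nsq_pos: "(\<exists>i<4. w i \<noteq> 0) \<Longrightarrow> nsq w > 0"
proof -
  assume "\<exists>i<4. w i \<noteq> 0"
  then obtain i where "i < 4" "w i \<noteq> 0" by blast
  thus ?thesis unfolding nsq_def by (intro sum_pos2[of _ i]) auto
qed

lemma nsq_zero: "nsq w = 0 \<Longrightarrow> i < 4 \<Longrightarrow> w i = 0"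
  using nsq_pos[of w] by force

definition Gf :: "(nat \<Rightarrow> nat \<Rightarrow> complex) \<Rightarrow> (nat \<Rightarrow> complex) \<Rightarrow> (nat \<Rightarrow> complex) \<Rightarrow> complex" where
  "Gf h x y = (\<Sum>i<4. \<Sum>j<4. cnj (x i) * h i j * y j)"

lemma Gf_expand:
  "Gf h (\<lambda>i. u i + complex_of_real t * z i) (\<lambda>i. u i + complex_of_real t * z i)
   = Gf h u u + complex_of_real t * Gf h u z + complex_of_real t * Gf h z u
     + complex_of_real (t\<^sup>2) * Gf h z z"
proof -
  have e: "cnj (u i + complex_of_real t * z i) * h i j * (u j + complex_of_real t * z j) =
     cnj (u i) * h i j * u j + complex_of_real t * (cnj (u i) * h i j * z j)
     + complex_of_real t * (cnj (z i) * h i j * u j)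
     + complex_of_real (t\<^sup>2) * (cnj (z i) * h i j * z j)" for i j
    by (simp add: algebra_simps power2_eq_square)
  show ?thesis
    unfolding Gf_def e by (simp add: sum.distrib sum_distrib_left)
qed

lemma Gf_herm:
  assumes "\<forall>i<4. \<forall>j<4. h i j = cnj (h j i)"
  shows "Gf h x y = cnj (Gf h y x)"
proof -
  have "cnj (Gf h y x) = (\<Sum>i<4. \<Sum>j<4. y i * cnj (h i j) * cnj (x j))"
    unfolding Gf_def by simp
  also have "\<dots> = (\<Sum>j<4. \<Sum>i<4. y i * cnj (h i j) * cnj (x j))"
    by (rule sum.swap)
  also have "\<dots> = Gf h x y"
    unfolding Gf_def
  proof (intro sum.cong refl)
    fix j i assume j: "j \<in> {..<4::nat}" and i: "i \<in> {..<4::nat}"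
    have "cnj (h i j) = h j i" using assms i j by (metis complex_cnj_cnj lessThan_iff)
    thus "y i * cnj (h i j) * cnj (x j) = cnj (x j) * h j i * y i" by simp
  qed
  finally show ?thesis by simp
qed

lemma psd_null:
  assumes herm: "\<forall>i<4. \<forall>j<4. h i j = cnj (h j i)"
    and nonneg: "\<forall>w. 0 \<le> Re (Gf h w w)"
    and zero: "Re (Gf h u u) = 0"
  shows "\<forall>i<4. (\<Sum>j<4. h i j * u j) = 0"
proof -
  define z where "z i = (\<Sum>j<4. h i j * u j)" for i
  have zu: "Gf h z u = complex_of_real (nsq z)"
    unfolding Gf_def z_def[symmetric] cnj_sum[symmetric]
    by (intro sum.cong refl) (simp add: z_def sum_distrib_left mult.assoc)
  have uz: "Gf h u z = complex_of_real (nsq z)"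
    using Gf_herm[OF herm, of u z] zu by simp
  define N where "N = nsq z"
  define K where "K = Re (Gf h z z)"
  have N0: "N \<ge> 0" unfolding N_def nsq_def by (simp add: sum_nonneg)
  have K0: "K \<ge> 0" using nonneg unfolding K_def by simp
  have key: "0 \<le> 2 * (N * t) + t\<^sup>2 * K" for t
    using nonneg[rule_format, of "\<lambda>i. u i + complex_of_real t * z i"]
    unfolding Gf_expand uz zu N_def[symmetric] K_def using zero by (simp add: K_def)
  have "N = 0"
  proof (rule ccontr)
    assume "N \<noteq> 0"
    hence Np: "N > 0" using N0 by simp
    define t where "t = - N / (K + 1)"
    have tK: "t * K = - N - t" unfolding t_def using K0 by (simp add: field_simps)
    have tneg: "t < 0" unfolding t_def using Np K0 by (simp add: divide_pos_pos)
    have "2 * (N * t) + t\<^sup>2 * K = 2 * (N * t) + t * (t * K)"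
      by (simp add: power2_eq_square mult.assoc)
    also have "\<dots> = t * (N - t)" unfolding tK by (simp add: algebra_simps)
    also have "\<dots> < 0" using tneg Np by (intro mult_neg_pos) auto
    finally show False using key[of t] by simp
  qed
  thus ?thesis using nsq_zero[of z] unfolding N_def z_def by blast
qed


type_synonym cx4 = "complex \<times> complex \<times> complex \<times> complex"

definition tv :: "cx4 \<Rightarrow> nat \<Rightarrow> complex" where
  "tv x i = (if i = 0 then fst x else if i = 1 then fst (snd x)
             else if i = 2 then fst (snd (snd x)) else snd (snd (snd x)))"

definition mk :: "(nat \<Rightarrow> complex) \<Rightarrow> cx4" where
  "mk w = (w 0, w 1, w 2, w 3)"

lemma tv_cont: "continuous_on S (\<lambda>x. tv x i)"
  by (cases "i = 0"; cases "i = 1"; cases "i = 2") (simp_all add: tv_def continuous_intros)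

lemma norm_tv: "norm x = sqrt (nsq (tv x))"
  by (cases x) (simp add: tv_def nsq_def sum4 norm_Pair)

lemma tv_mk: "i < 4 \<Longrightarrow> tv (mk w) i = w i"
  by (auto simp: tv_def mk_def eval_nat_numeral less_Suc_eq)

lemma qf_cong: "(\<And>i. i < 4 \<Longrightarrow> v i = w i) \<Longrightarrow> qf M v = qf M w"
  unfolding qf_def by (intro sum.cong refl) auto

lemma nsq_cong: "(\<And>i. i < 4 \<Longrightarrow> v i = w i) \<Longrightarrow> nsq v = nsq w"
  unfolding nsq_def by (intro sum.cong refl) auto

lemma qf_scale: "qf M (\<lambda>i. complex_of_real a * w i) = complex_of_real (a\<^sup>2) * qf M w"
  unfolding qf_def by (simp add: sum_distrib_left power2_eq_square algebra_simps)

lemma nsq_scale: "nsq (\<lambda>i. complex_of_real a * w i) = a\<^sup>2 * nsq w"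
  unfolding nsq_def by (simp add: sum_distrib_left power_mult_distrib norm_mult)

lemma qf_zero: "nsq w = 0 \<Longrightarrow> qf M w = 0"
  unfolding qf_def using nsq_zero[of w] by simp

lemma nsq_ge0: "nsq w \<ge> 0"
  unfolding nsq_def by (simp add: sum_nonneg)

lemma Gf_shift0:
  "Gf (\<lambda>i j. M $$ (i,j) - (if i = j then complex_of_real m else 0)) w w
   = qf M w - complex_of_real (m * nsq w)"
proof -
  have "Gf (\<lambda>i j. M $$ (i,j) - (if i = j then complex_of_real m else 0)) w w
     = (\<Sum>i<4. (\<Sum>j<4. cnj (w i) * M $$ (i,j) * w j) - complex_of_real m * (cnj (w i) * w i))"
    unfolding Gf_def
  proof (intro sum.cong refl)
    fix i assume i: "i \<in> {..<4::nat}"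
    have "(\<Sum>j<4. cnj (w i) * (M $$ (i,j) - (if i = j then complex_of_real m else 0)) * w j)
      = (\<Sum>j<4. cnj (w i) * M $$ (i,j) * w j - (if i = j then complex_of_real m * (cnj (w i) * w i) else 0))"
      by (intro sum.cong refl) (auto simp: algebra_simps)
    also have "\<dots> = (\<Sum>j<4. cnj (w i) * M $$ (i,j) * w j) - complex_of_real m * (cnj (w i) * w i)"
      using i by (simp add: sum_subtractf)
    finally show "(\<Sum>j<4. cnj (w i) * (M $$ (i,j) - (if i = j then complex_of_real m else 0)) * w j)
      = (\<Sum>j<4. cnj (w i) * M $$ (i,j) * w j) - complex_of_real m * (cnj (w i) * w i)" .
  qed
  also have "\<dots> = qf M w - complex_of_real m * (\<Sum>i<4. cnj (w i) * w i)"
    unfolding qf_def by (simp add: sum_subtractf sum_distrib_left)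
  finally show ?thesis unfolding cnj_sum by simp
qed

lemma Gf_shift:
  assumes "\<And>i j. h i j = M $$ (i,j) - (if i = j then complex_of_real m else 0)"
  shows "Gf h w w = qf M w - complex_of_real (m * nsq w)"
proof -
  have "h = (\<lambda>i j. M $$ (i,j) - (if i = j then complex_of_real m else 0))"
    using assms by (intro ext) simp
  thus ?thesis using Gf_shift0 by simp
qed

lemma herm_entry: "hermitian4 M \<Longrightarrow> i < 4 \<Longrightarrow> j < 4 \<Longrightarrow> M $$ (i,j) = cnj (M $$ (j,i))"
  unfolding hermitian4_def by blast

lemma neg_eig:
  assumes herm: "hermitian4 M" and neg: "Re (qf M w) < 0"
  shows "\<exists>m<0. \<exists>u. eigp M (complex_of_real m) u"
proof -
  define f where "f x = Re (qf M (tv x))" for x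
  have cont: "continuous_on (sphere 0 1) f"
    unfolding f_def qf_def by (intro continuous_intros tv_cont)
  have ne: "sphere (0::cx4) 1 \<noteq> {}"
  proof -
    have "(1, 0, 0, 0) \<in> sphere (0::cx4) 1" by (simp add: norm_Pair)
    thus ?thesis by blast
  qed
  obtain x0 where x0: "x0 \<in> sphere 0 1" and min: "\<forall>y\<in>sphere 0 1. f x0 \<le> f y"
    using continuous_attains_inf[OF compact_sphere ne cont] by blast
  define m where "m = f x0"
  define u where "u = tv x0"
  have nu: "nsq u = 1" using x0 norm_tv[of x0] unfolding u_def
    by (simp add: nsq_ge0)
  have bound: "m * nsq v \<le> Re (qf M v)" for v
  proof (cases "nsq v = 0")
    case True thus ?thesis using qf_zero[OF True] by simp
  next
    case False
    hence np: "nsq v > 0" using nsq_ge0[of v] by simp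
    define c where "c = sqrt (nsq v)"
    have cp: "c > 0" unfolding c_def using np by simp
    have c2: "c\<^sup>2 = nsq v" unfolding c_def using np by simp
    define v' where "v' = (\<lambda>i. complex_of_real (1 / c) * v i)"
    have "nsq (tv (mk v')) = nsq v'" by (rule nsq_cong) (simp add: tv_mk)
    also have "\<dots> = 1" unfolding v'_def nsq_scale using cp c2 np
      by (simp add: power_divide)
    finally have "mk v' \<in> sphere 0 1" using norm_tv[of "mk v'"] by simp
    hence "m \<le> f (mk v')" using min unfolding m_def by blast
    also have "f (mk v') = Re (qf M v')" unfolding f_def
      by (rule arg_cong[where f=Re], rule qf_cong) (simp add: tv_mk)
    also have "\<dots> = Re (qf M v) / c\<^sup>2" unfolding v'_def qf_scale
      by (simp add: power_divide)
    finally have "m \<le> Re (qf M v) / nsq v" using c2 by simp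
    thus ?thesis using np by (simp add: pos_le_divide_eq)
  qed
  have wn: "nsq w > 0"
  proof (rule ccontr)
    assume "\<not> nsq w > 0"
    hence "nsq w = 0" using nsq_ge0[of w] by simp
    thus False using qf_zero[of w M] neg by simp
  qed
  have mneg: "m < 0"
  proof (rule ccontr)
    assume "\<not> m < 0"
    hence "0 \<le> m * nsq w" using wn by simp
    thus False using bound[of w] neg by simp
  qed
  define h where "h i j = M $$ (i,j) - (if i = j then complex_of_real m else 0)" for i j
  have hh: "\<forall>i<4. \<forall>j<4. h i j = cnj (h j i)"
  proof (intro allI impI)
    fix i j :: nat assume i: "i < 4" and j: "j < 4"
    have e: "cnj (M $$ (j,i)) = M $$ (i,j)" using herm_entry[OF herm i j] by simp
    show "h i j = cnj (h j i)" unfolding h_def by (simp add: e)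
  qed
  have hdef: "\<And>i j. h i j = M $$ (i,j) - (if i = j then complex_of_real m else 0)"
    by (simp add: h_def)
  have hnn: "\<forall>v. 0 \<le> Re (Gf h v v)"
    using bound by (simp add: Gf_shift[OF hdef])
  have hz: "Re (Gf h u u) = 0"
    unfolding Gf_shift[OF hdef] nu using m_def u_def f_def by simp
  have null: "\<forall>i<4. (\<Sum>j<4. h i j * u j) = 0" by (rule psd_null[OF hh hnn hz])
  have "eigp M (complex_of_real m) u"
    unfolding eigp_def
  proof (intro conjI allI impI)
    fix i assume i: "i < (4::nat)"
    have "(\<Sum>j<4. h i j * u j) = (\<Sum>j<4. M $$ (i,j) * u j - (if i = j then complex_of_real m * u j else 0))"
      unfolding h_def by (intro sum.cong refl) (auto simp: algebra_simps)
    also have "\<dots> = (\<Sum>j<4. M $$ (i,j) * u j) - complex_of_real m * u i"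
      using i by (simp add: sum_subtractf)
    finally show "(\<Sum>j<4. M $$ (i,j) * u j) = complex_of_real m * u i" using null i by simp
  next
    show "\<exists>i<4. u i \<noteq> 0"
    proof (rule ccontr)
      assume "\<not> (\<exists>i<4. u i \<noteq> 0)"
      hence "nsq u = nsq (\<lambda>_. 0)" by (intro nsq_cong) auto
      thus False using nu by (simp add: nsq_def)
    qed
  qed
  thus ?thesis using mneg by blast
qed


lemma psd4_alt: "psd4 M \<longleftrightarrow> hermitian4 M \<and> (\<forall>v. qf M v \<in> \<real> \<and> 0 \<le> Re (qf M v))"
  unfolding psd4_def qf_def Let_def ..

lemma qf_real: assumes "hermitian4 M" shows "qf M v \<in> \<real>"
proof -
  have hh: "\<forall>i<4. \<forall>j<4. M $$ (i,j) = cnj (M $$ (j,i))" using assms unfolding hermitian4_def by blast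
  have e1: "qf M v = Gf (\<lambda>i j. M $$ (i,j)) v v" by (simp add: qf_def Gf_def)
  have e2: "Gf (\<lambda>i j. M $$ (i,j)) v v = cnj (Gf (\<lambda>i j. M $$ (i,j)) v v)" by (rule Gf_herm[OF hh])
  have "cnj (qf M v) = qf M v" unfolding e1 using e2 by (rule sym)
  thus ?thesis by (simp add: Reals_cnj_iff)
qed

lemma eig_nonneg:
  assumes "psd4 M" "eigp M (complex_of_real a) u"
  shows "0 \<le> a"
proof -
  have "qf M u = (\<Sum>i<4. cnj (u i) * (\<Sum>j<4. M $$ (i,j) * u j))"
    by (simp add: qf_def sum_distrib_left mult.assoc)
  also have "\<dots> = (\<Sum>i<4. complex_of_real a * (cnj (u i) * u i))"
    using assms(2) unfolding eigp_def by (intro sum.cong refl) auto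
  also have "\<dots> = complex_of_real (a * nsq u)"
    by (simp add: sum_distrib_left[symmetric] cnj_sum)
  finally have "0 \<le> a * nsq u" using assms(1) unfolding psd4_alt by (metis Re_complex_of_real)
  moreover have "nsq u > 0" using assms(2) unfolding eigp_def by (intro nsq_pos) blast
  ultimately show ?thesis by (simp add: zero_le_mult_iff)
qed

lemma poly_spec:
  "has_spectrum4 M a b c d \<Longrightarrow> poly (char_poly M) k = 0 \<longleftrightarrow>
     k = complex_of_real a \<or> k = complex_of_real b \<or> k = complex_of_real c \<or> k = complex_of_real d"
proof -
  assume h: "has_spectrum4 M a b c d"
  have "poly (char_poly M) k = poly [:- complex_of_real a, 1:] k * poly [:- complex_of_real b, 1:] k
      * poly [:- complex_of_real c, 1:] k * poly [:- complex_of_real d, 1:] k"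
    using h unfolding has_spectrum4_def by (simp only: poly_mult)
  also have "\<dots> = (k - complex_of_real a) * (k - complex_of_real b) * (k - complex_of_real c) * (k - complex_of_real d)"
    by simp
  finally show ?thesis by simp
qed

lemma psd_iff_spec:
  assumes herm: "hermitian4 M" and sp: "has_spectrum4 M a b c d"
  shows "psd4 M \<longleftrightarrow> (0 \<le> a \<and> 0 \<le> b \<and> 0 \<le> c \<and> 0 \<le> d)"
proof
  have M: "M \<in> carrier_mat 4 4" using herm unfolding hermitian4_def by blast
  assume psd: "psd4 M"
  have "0 \<le> x" if "x \<in> {a,b,c,d}" for x
  proof -
    have "poly (char_poly M) (complex_of_real x) = 0" using poly_spec[OF sp] that by auto
    then obtain u where "eigp M (complex_of_real x) u" using root_iff_eig[OF M] by blast
    thus ?thesis using eig_nonneg[OF psd] by blast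
  qed
  thus "0 \<le> a \<and> 0 \<le> b \<and> 0 \<le> c \<and> 0 \<le> d" by auto
next
  have M: "M \<in> carrier_mat 4 4" using herm unfolding hermitian4_def by blast
  assume nn: "0 \<le> a \<and> 0 \<le> b \<and> 0 \<le> c \<and> 0 \<le> d"
  show "psd4 M"
    unfolding psd4_alt
  proof (intro conjI allI herm qf_real)
    fix v
    show "0 \<le> Re (qf M v)"
    proof (rule ccontr)
      assume "\<not> 0 \<le> Re (qf M v)"
      then obtain m u where m: "m < 0" "eigp M (complex_of_real m) u"
        using neg_eig[OF herm, of v] by (auto simp: not_le)
      hence "poly (char_poly M) (complex_of_real m) = 0" using root_iff_eig[OF M] by blast
      hence "m = a \<or> m = b \<or> m = c \<or> m = d" using poly_spec[OF sp] by simp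
      thus False using m(1) nn by linarith
    qed
  qed
qed



lemma negp_uminus: "negp P = - P"
  by (cases P) (simp add: negp_def)

lemma disc_norm: "Q \<in> disc P s \<longleftrightarrow> norm (Q - P) \<le> s"
  by (cases Q; cases P) (simp add: disc_def norm_Pair)

lemma norm_sq: "(norm (P::real\<times>real))\<^sup>2 = (fst P)\<^sup>2 + (snd P)\<^sup>2"
  by (cases P) (simp add: norm_Pair)

lemma norm_le_iff: "0 \<le> r \<Longrightarrow> norm (P::real\<times>real) \<le> r \<longleftrightarrow> (fst P)\<^sup>2 + (snd P)\<^sup>2 \<le> r\<^sup>2"
  unfolding norm_sq[symmetric] by (simp add: power_mono_iff)

lemma V_ne:
  assumes "0 \<le> r" "r + R = 2" "r \<le> 1"
  shows "disc P r \<inter> disc (negp P) R \<noteq> {} \<longleftrightarrow> (fst P)\<^sup>2 + (snd P)\<^sup>2 \<le> 1"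
proof
  assume "disc P r \<inter> disc (negp P) R \<noteq> {}"
  then obtain Q where "Q \<in> disc P r" "Q \<in> disc (negp P) R" by blast
  hence Q: "norm (Q - P) \<le> r" "norm (Q + P) \<le> R"
    unfolding disc_norm negp_uminus by auto
  have "norm (2 *\<^sub>R P) = norm ((Q + P) - (Q - P))" by (simp add: algebra_simps scaleR_2)
  also have "\<dots> \<le> norm (Q + P) + norm (Q - P)" by (rule norm_triangle_ineq4)
  finally have "norm P \<le> 1" using Q assms by simp
  thus "(fst P)\<^sup>2 + (snd P)\<^sup>2 \<le> 1" using norm_le_iff[of 1 P] by simp
next
  assume "(fst P)\<^sup>2 + (snd P)\<^sup>2 \<le> 1"
  hence n: "norm P \<le> 1" using norm_le_iff[of 1 P] by simp
  define Q where "Q = (1 - r) *\<^sub>R P"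
  have "Q - P = (- r) *\<^sub>R P" unfolding Q_def by (simp add: algebra_simps)
  hence "norm (Q - P) = r * norm P" using assms by simp
  hence q1: "norm (Q - P) \<le> r" using n assms(1) by (simp add: mult_left_le)
  have R: "R = 2 - r" using assms by simp
  have "Q + P = R *\<^sub>R P" unfolding Q_def R by (simp add: algebra_simps scaleR_2)
  hence "norm (Q + P) = R * norm P" using assms by simp
  hence q2: "norm (Q + P) \<le> R" using n assms by (simp add: mult_left_le)
  have "Q \<in> disc P r \<inter> disc (negp P) R" using q1 q2 by (simp add: disc_norm negp_uminus)
  thus "disc P r \<inter> disc (negp P) R \<noteq> {}" by blast
qed

lemma S_ne:
  assumes "0 \<le> r"
  shows "disc P r \<inter> disc (negp P) r \<noteq> {} \<longleftrightarrow> (fst P)\<^sup>2 + (snd P)\<^sup>2 \<le> r\<^sup>2"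
proof
  assume "disc P r \<inter> disc (negp P) r \<noteq> {}"
  then obtain Q where "Q \<in> disc P r" "Q \<in> disc (negp P) r" by blast
  hence Q: "norm (Q - P) \<le> r" "norm (Q + P) \<le> r"
    unfolding disc_norm negp_uminus by auto
  have "norm (2 *\<^sub>R P) = norm ((Q + P) - (Q - P))" by (simp add: algebra_simps scaleR_2)
  also have "\<dots> \<le> norm (Q + P) + norm (Q - P)" by (rule norm_triangle_ineq4)
  finally have "norm P \<le> r" using Q by simp
  thus "(fst P)\<^sup>2 + (snd P)\<^sup>2 \<le> r\<^sup>2" using norm_le_iff[OF assms, of P] by simp
next
  assume "(fst P)\<^sup>2 + (snd P)\<^sup>2 \<le> r\<^sup>2"
  hence n: "norm P \<le> r" using norm_le_iff[OF assms, of P] by simp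
  have "0 \<in> disc P r" "0 \<in> disc (negp P) r" using n by (simp_all add: disc_norm negp_uminus)
  thus "disc P r \<inter> disc (negp P) r \<noteq> {}" by blast
qed

lemma scale_mem: "e = 1 \<or> e = -1 \<Longrightarrow> Q \<in> scale_set e X \<longleftrightarrow> (e * fst Q, e * snd Q) \<in> X"
proof
  assume e: "e = 1 \<or> e = -1"
  hence ee: "e * e = 1" by auto
  {
    assume "Q \<in> scale_set e X"
    then obtain a where a: "a \<in> X" "Q = (e * fst a, e * snd a)" unfolding scale_set_def by blast
    have "(e * fst Q, e * snd Q) = a" using a(2) ee by (simp add: mult.assoc[symmetric])
    thus "(e * fst Q, e * snd Q) \<in> X" using a(1) by simp
  }
  {
    assume q: "(e * fst Q, e * snd Q) \<in> X"
    have "Q = (\<lambda>a. (e * fst a, e * snd a)) (e * fst Q, e * snd Q)"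
      using ee by (simp add: mult.assoc[symmetric])
    thus "Q \<in> scale_set e X" unfolding scale_set_def using q by (rule image_eqI)
  }
qed

lemma dist_eq: "Q \<in> disc P s \<longleftrightarrow> sqrt ((fst Q - fst P)\<^sup>2 + (snd Q - snd P)\<^sup>2) \<le> s"
  by (simp add: disc_def)


lemma core:
  fixes P Q :: "real \<times> real"
  assumes t: "t \<in> {1,2::nat}" and b0: "\<bar>b0\<bar> \<le> 1" and Lp0: "0 \<le> Lp" and Lm0: "0 \<le> Lm"
    and dm: "sqrt ((fst Q - fst P)\<^sup>2 + (snd Q - snd P)\<^sup>2) = Lm"
    and dp: "sqrt ((fst Q + fst P)\<^sup>2 + (snd Q + snd P)\<^sup>2) = Lp"
    and hv: "val \<longleftrightarrow> (if t = 1 then Lm \<le> 1 + b0 \<and> Lp \<le> 1 - b0 else Lp \<le> 1 + b0 \<and> Lm \<le> 1 - b0)"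
    and hp: "ppt \<longleftrightarrow> (if t = 1 then Lp \<le> 1 + b0 \<and> Lm \<le> 1 - b0 else Lm \<le> 1 + b0 \<and> Lp \<le> 1 - b0)"
  shows "let V = disc P (1 - \<bar>b0\<bar>) \<inter> disc (negp P) (1 + \<bar>b0\<bar>);
             S = disc P (1 - \<bar>b0\<bar>) \<inter> disc (negp P) (1 - \<bar>b0\<bar>); Ent = V - S in
     (val \<longleftrightarrow> Q \<in> scale_set ((-1) ^ t * sgn0 b0) V)
   \<and> (Q \<in> S \<longrightarrow> val \<and> ppt)
   \<and> (Q \<in> scale_set ((-1) ^ t * sgn0 b0) Ent \<longrightarrow> val \<and> \<not> ppt)
   \<and> (V \<noteq> {} \<longleftrightarrow> (fst P)\<^sup>2 + (snd P)\<^sup>2 \<le> 1)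
   \<and> (S \<noteq> {} \<longleftrightarrow> (fst P)\<^sup>2 + (snd P)\<^sup>2 \<le> (1 - \<bar>b0\<bar>)\<^sup>2)"
proof -
  define e where "e = (-1) ^ t * sgn0 b0"
  have e: "e = 1 \<or> e = -1" using t unfolding e_def sgn0_def by auto
  have sq1: "(- a - b)\<^sup>2 = (a + b)\<^sup>2" "(- a + b)\<^sup>2 = (a - b)\<^sup>2" for a b :: real
    by (simp_all add: power2_eq_square algebra_simps)
  have m1: "(e * fst Q, e * snd Q) \<in> disc P s \<longleftrightarrow> (if e = 1 then Lm else Lp) \<le> s" for s
    using e dm dp unfolding dist_eq by (auto simp: sq1)
  have m2: "(e * fst Q, e * snd Q) \<in> disc (negp P) s \<longleftrightarrow> (if e = 1 then Lp else Lm) \<le> s" for s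
    using e dm dp unfolding dist_eq negp_def by (auto simp: sq1 power2_commute)
  have m3: "Q \<in> disc P s \<longleftrightarrow> Lm \<le> s" for s using dm unfolding dist_eq by simp
  have m4: "Q \<in> disc (negp P) s \<longleftrightarrow> Lp \<le> s" for s using dp unfolding dist_eq negp_def by simp
  have ecase: "e = (if t = 1 then (if b0 < 0 then 1 else -1) else (if b0 < 0 then -1 else 1))"
    using t unfolding e_def sgn0_def by auto
  have A: "val \<longleftrightarrow> Q \<in> scale_set e (disc P (1 - \<bar>b0\<bar>) \<inter> disc (negp P) (1 + \<bar>b0\<bar>))"
    unfolding scale_mem[OF e] Int_iff m1 m2 hv using b0 ecase by (auto split: if_splits)
  have B: "Q \<in> disc P (1 - \<bar>b0\<bar>) \<inter> disc (negp P) (1 - \<bar>b0\<bar>) \<longrightarrow> val \<and> ppt"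
    unfolding Int_iff m3 m4 hv hp using b0 by auto
  have C: "Q \<in> scale_set e ((disc P (1 - \<bar>b0\<bar>) \<inter> disc (negp P) (1 + \<bar>b0\<bar>))
      - (disc P (1 - \<bar>b0\<bar>) \<inter> disc (negp P) (1 - \<bar>b0\<bar>))) \<longrightarrow> val \<and> \<not> ppt"
    unfolding scale_mem[OF e] Int_iff Diff_iff m1 m2 hv hp using b0 ecase by (auto split: if_splits)
  have D: "disc P (1 - \<bar>b0\<bar>) \<inter> disc (negp P) (1 + \<bar>b0\<bar>) \<noteq> {} \<longleftrightarrow> (fst P)\<^sup>2 + (snd P)\<^sup>2 \<le> 1"
    by (rule V_ne) (use b0 in auto)
  have E: "disc P (1 - \<bar>b0\<bar>) \<inter> disc (negp P) (1 - \<bar>b0\<bar>) \<noteq> {} \<longleftrightarrow> (fst P)\<^sup>2 + (snd P)\<^sup>2 \<le> (1 - \<bar>b0\<bar>)\<^sup>2"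
    by (rule S_ne) (use b0 in auto)
  show ?thesis unfolding Let_def e_def[symmetric] using A B C D E by blast
qed


lemma idx_bound: "i < 4 \<Longrightarrow> j < 4 \<Longrightarrow> 2 * (i div 2) + j mod 2 < (4::nat)"
  by presburger

lemma herm_ptrans:
  assumes "hermitian4 \<rho>" shows "hermitian4 (ptrans \<rho>)"
  unfolding hermitian4_def
proof (intro conjI allI impI)
  show "ptrans \<rho> \<in> carrier_mat 4 4" unfolding ptrans_def by simp
  fix i j :: nat assume i: "i < 4" and j: "j < 4"
  have b1: "2 * (i div 2) + j mod 2 < 4" and b2: "2 * (j div 2) + i mod 2 < 4"
    using idx_bound i j by auto
  have "\<rho> $$ (2 * (i div 2) + j mod 2, 2 * (j div 2) + i mod 2)
      = cnj (\<rho> $$ (2 * (j div 2) + i mod 2, 2 * (i div 2) + j mod 2))"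
    by (rule herm_entry[OF assms b1 b2])
  thus "ptrans \<rho> $$ (i, j) = cnj (ptrans \<rho> $$ (j, i))"
    unfolding ptrans_def using i j by simp
qed

theorem proposition2:
  fixes \<rho> :: "complex mat" and t :: nat and b0 b1 b2 b3 b4 :: real
  assumes "t \<in> {1, 2}" and "\<bar>b0\<bar> \<le> 1"
    and "gen_group2_state t \<rho> b0 b1 b2 b3 b4"
  defines "C \<equiv> (b4, b3)" and "D \<equiv> (b1, b2)" and "E \<equiv> (b1, - b2)" and "F \<equiv> (b4, - b3)"
    and "r \<equiv> 1 - \<bar>b0\<bar>" and "R \<equiv> 1 + \<bar>b0\<bar>"
    and "\<epsilon> \<equiv> (-1) ^ t * sgn0 b0"
  shows
    "(let V = disc C r \<inter> disc (negp C) R; S = disc C r \<inter> disc (negp C) r; Ent = V - S in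
        (valid \<rho> \<longleftrightarrow> E \<in> scale_set \<epsilon> V)
      \<and> (E \<in> S \<longrightarrow> separable \<rho>)
      \<and> (E \<in> scale_set \<epsilon> Ent \<longrightarrow> entangled \<rho>)
      \<and> (V \<noteq> {} \<longleftrightarrow> b3\<^sup>2 + b4\<^sup>2 \<le> 1)
      \<and> (S \<noteq> {} \<longleftrightarrow> b3\<^sup>2 + b4\<^sup>2 \<le> (1 - \<bar>b0\<bar>)\<^sup>2))
   \<and> (let V' = disc D r \<inter> disc (negp D) R; S' = disc D r \<inter> disc (negp D) r; Ent' = V' - S' in
        (valid \<rho> \<longleftrightarrow> F \<in> scale_set \<epsilon> V')
      \<and> (F \<in> S' \<longrightarrow> separable \<rho>)
      \<and> (F \<in> scale_set \<epsilon> Ent' \<longrightarrow> entangled \<rho>)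
      \<and> (V' \<noteq> {} \<longleftrightarrow> b1\<^sup>2 + b2\<^sup>2 \<le> 1)
      \<and> (S' \<noteq> {} \<longleftrightarrow> b1\<^sup>2 + b2\<^sup>2 \<le> (1 - \<bar>b0\<bar>)\<^sup>2))"
  proof -
  have herm: "hermitian4 \<rho>" and ty: "group2_type t \<rho> b0 b1 b2 b3 b4"
    using assms(3) unfolding gen_group2_state_def by auto
  have hermG: "hermitian4 (ptrans \<rho>)" by (rule herm_ptrans[OF herm])
  define Lp where "Lp = Lplus b1 b2 b3 b4"
  define Lm where "Lm = Lminus b1 b2 b3 b4"
  have Lp0: "0 \<le> Lp" by (simp add: Lp_def Lplus_def)
  have Lm0: "0 \<le> Lm" by (simp add: Lm_def Lminus_def)
  have b: "\<bar>b0\<bar> \<le> 1" by (rule assms(2))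
  have tt: "t \<in> {1, 2}" by (rule assms(1))
  have ty': "(t = 1 \<and> has_spectrum4 \<rho> ((1+b0+Lm)/4) ((1+b0-Lm)/4) ((1-b0+Lp)/4) ((1-b0-Lp)/4)
            \<and> has_spectrum4 (ptrans \<rho>) ((1+b0+Lp)/4) ((1+b0-Lp)/4) ((1-b0+Lm)/4) ((1-b0-Lm)/4))
   \<or> (t = 2 \<and> has_spectrum4 \<rho> ((1+b0+Lp)/4) ((1+b0-Lp)/4) ((1-b0+Lm)/4) ((1-b0-Lm)/4)
            \<and> has_spectrum4 (ptrans \<rho>) ((1+b0+Lm)/4) ((1+b0-Lm)/4) ((1-b0+Lp)/4) ((1-b0-Lp)/4))"
    using ty unfolding group2_type_def Let_def Lp_def Lm_def .
  have hv: "valid \<rho> \<longleftrightarrow> (if t = 1 then Lm \<le> 1 + b0 \<and> Lp \<le> 1 - b0 else Lp \<le> 1 + b0 \<and> Lm \<le> 1 - b0)"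
   and hp: "psd4 (ptrans \<rho>) \<longleftrightarrow> (if t = 1 then Lp \<le> 1 + b0 \<and> Lm \<le> 1 - b0 else Lm \<le> 1 + b0 \<and> Lp \<le> 1 - b0)"
  proof -
    have "(valid \<rho> \<longleftrightarrow> (if t = 1 then Lm \<le> 1 + b0 \<and> Lp \<le> 1 - b0 else Lp \<le> 1 + b0 \<and> Lm \<le> 1 - b0))
      \<and> (psd4 (ptrans \<rho>) \<longleftrightarrow> (if t = 1 then Lp \<le> 1 + b0 \<and> Lm \<le> 1 - b0 else Lm \<le> 1 + b0 \<and> Lp \<le> 1 - b0))"
      using ty'
    proof
      assume h: "t = 1 \<and> has_spectrum4 \<rho> ((1+b0+Lm)/4) ((1+b0-Lm)/4) ((1-b0+Lp)/4) ((1-b0-Lp)/4)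
            \<and> has_spectrum4 (ptrans \<rho>) ((1+b0+Lp)/4) ((1+b0-Lp)/4) ((1-b0+Lm)/4) ((1-b0-Lm)/4)"
      have s1: "psd4 \<rho> \<longleftrightarrow> (0 \<le> (1+b0+Lm)/4 \<and> 0 \<le> (1+b0-Lm)/4 \<and> 0 \<le> (1-b0+Lp)/4 \<and> 0 \<le> (1-b0-Lp)/4)"
        using h by (intro psd_iff_spec[OF herm]) blast
      have s2: "psd4 (ptrans \<rho>) \<longleftrightarrow> (0 \<le> (1+b0+Lp)/4 \<and> 0 \<le> (1+b0-Lp)/4 \<and> 0 \<le> (1-b0+Lm)/4 \<and> 0 \<le> (1-b0-Lm)/4)"
        using h by (intro psd_iff_spec[OF hermG]) blast
      show ?thesis unfolding valid_def s1 s2 using h Lp0 Lm0 b by auto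
    next
      assume h: "t = 2 \<and> has_spectrum4 \<rho> ((1+b0+Lp)/4) ((1+b0-Lp)/4) ((1-b0+Lm)/4) ((1-b0-Lm)/4)
            \<and> has_spectrum4 (ptrans \<rho>) ((1+b0+Lm)/4) ((1+b0-Lm)/4) ((1-b0+Lp)/4) ((1-b0-Lp)/4)"
      have s1: "psd4 \<rho> \<longleftrightarrow> (0 \<le> (1+b0+Lp)/4 \<and> 0 \<le> (1+b0-Lp)/4 \<and> 0 \<le> (1-b0+Lm)/4 \<and> 0 \<le> (1-b0-Lm)/4)"
        using h by (intro psd_iff_spec[OF herm]) blast
      have s2: "psd4 (ptrans \<rho>) \<longleftrightarrow> (0 \<le> (1+b0+Lm)/4 \<and> 0 \<le> (1+b0-Lm)/4 \<and> 0 \<le> (1-b0+Lp)/4 \<and> 0 \<le> (1-b0-Lp)/4)"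
        using h by (intro psd_iff_spec[OF hermG]) blast
      show ?thesis unfolding valid_def s1 s2 using h Lp0 Lm0 b by auto
    qed
    thus "valid \<rho> \<longleftrightarrow> (if t = 1 then Lm \<le> 1 + b0 \<and> Lp \<le> 1 - b0 else Lp \<le> 1 + b0 \<and> Lm \<le> 1 - b0)"
     and "psd4 (ptrans \<rho>) \<longleftrightarrow> (if t = 1 then Lp \<le> 1 + b0 \<and> Lm \<le> 1 - b0 else Lm \<le> 1 + b0 \<and> Lp \<le> 1 - b0)"
      by blast+
  qed
  have sq: "(- x - y)\<^sup>2 = (x + y)\<^sup>2" "(- x + y)\<^sup>2 = (x - y)\<^sup>2" for x y :: real
    by (simp_all add: power2_eq_square algebra_simps)
  have dm1: "sqrt ((fst (b1, - b2) - fst (b4, b3))\<^sup>2 + (snd (b1, - b2) - snd (b4, b3))\<^sup>2) = Lm"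
    by (simp add: Lm_def Lminus_def sq)
  have dp1: "sqrt ((fst (b1, - b2) + fst (b4, b3))\<^sup>2 + (snd (b1, - b2) + snd (b4, b3))\<^sup>2) = Lp"
    by (simp add: Lp_def Lplus_def sq power2_commute)
  have dm2: "sqrt ((fst (b4, - b3) - fst (b1, b2))\<^sup>2 + (snd (b4, - b3) - snd (b1, b2))\<^sup>2) = Lm"
    by (simp add: Lm_def Lminus_def sq power2_commute add.commute)
  have dp2: "sqrt ((fst (b4, - b3) + fst (b1, b2))\<^sup>2 + (snd (b4, - b3) + snd (b1, b2))\<^sup>2) = Lp"
    by (simp add: Lp_def Lplus_def sq add.commute)
  note c1 = core[OF tt b Lp0 Lm0 dm1 dp1 hv hp]
  note c2 = core[OF tt b Lp0 Lm0 dm2 dp2 hv hp]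
  have e1: "b4\<^sup>2 + b3\<^sup>2 = b3\<^sup>2 + b4\<^sup>2" by simp
  show ?thesis
    using c1 c2 unfolding C_def D_def E_def F_def r_def R_def \<epsilon>_def separable_def entangled_def
      Let_def fst_conv snd_conv e1
    by blast
qed

end
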